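(* Let $\lambda\in(0,1)$ with $\lambda\neq1-\frac1{2n}$ for all $n\in\mathbb{N}$. Let $\tau_0(x)=\lambda x$, $\tau_{1/4}(x)=\lambda(x+\frac14)$, let $X_L$ be their attractor, $W(x)=\cos^2(2\pi x/\lambda)$, and let $\nu_\lambda$, $\mathcal{W}_0$, $W^\omega$, $\tau_\omega$ be as in the context. Then the restriction of $|\hat\nu_\lambda|^2$ to $X_L$ is the unique continuous function $f$ on $X_L$ satisfying $$\sum_{\omega\in\mathcal{W}_0}W^\omega(x)f(\tau_\omega x)=1\quad\text{for all }x\in X_L,$$ where the series is understood as the limit as $n\to\infty$ of the partial sums over words $\omega\in\mathcal{W}_0$ of length at most $n$.
   Context: $X_L$ is the unique nonempty compact set with $X_L=\tau_0(X_L)\cup\tau_{1/4}(X_L)$. $\nu_\lambda$ is the unique Borel probability measure on $\mathbb{R}$ with $\nu_\lambda=\frac12(\nu_\lambda\circ\tau_+^{-1}+\nu_\lambda\circ\tau_-^{-1})$, $\tau_\pm(x)=\lambda x\pm1$, and $\hat\nu_\lambda(t)=\int e^{2\pi ixt}d\nu_\lambda(x)$. $\mathcal{W}_0=\{\emptyset\}\cup\{\omega_1\dots\omega_n: n\ge1,\ \omega_i\in\{0,\frac14\},\ \omega_n=\frac14\}$. For a finite word $\omega=\omega_1\dots\omega_n$: $\tau_\omega x=\tau_{\omega_n}\cdots\tau_{\omega_1}x$, $W^\omega(x)=W(\tau_{\omega_1}x)W(\tau_{\omega_2}\tau_{\omega_1}x)\cdots W(\tau_{\omega_n}\cdots\tau_{\omega_1}x)$;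 $\tau_\emptyset x=x$, $W^\emptyset=1$. *)

theory Defs
  imports "HOL-Probability.Probability"
begin

definition tauL :: "real \<Rightarrow> real \<Rightarrow> real \<Rightarrow> real" where
  "tauL lam d x = lam * (x + d)"

definition XL :: "real \<Rightarrow> real set" where
  "XL lam = (THE X. compact X \<and> X \<noteq> {} \<and>
              X = tauL lam 0 ` X \<union> tauL lam (1/4) ` X)"

definition nu :: "real \<Rightarrow> real measure" where
  "nu lam = (THE M. prob_space M \<and> sets M = sets borel \<and>
     (\<forall>A\<in>sets borel.
        emeasure M A = (emeasure M ((\<lambda>x. lam * x + 1) -` A)
                       + emeasure M ((\<lambda>x. lam * x - 1) -` A)) / 2))"

definition nu_hat :: "real \<Rightarrow> real \<Rightarrow> complex" where
  "nu_hat lam t = (LINT x|nu lam. cis (2 * pi * x * t))"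

definition Wf :: "real \<Rightarrow> real \<Rightarrow> real" where
  "Wf lam x = (cos (2 * pi * x / lam))^2"

text \<open>Words omega_1 ... omega_n as lists; tau_omega x = tau_{omega_n} ( ... tau_{omega_1} x).\<close>
definition tau_word :: "real \<Rightarrow> real list \<Rightarrow> real \<Rightarrow> real" where
  "tau_word lam w x = fold (tauL lam) w x"

definition W_word :: "real \<Rightarrow> real list \<Rightarrow> real \<Rightarrow> real" where
  "W_word lam w x = (\<Prod>k\<in>{1..length w}. Wf lam (tau_word lam (take k w) x))"

definition W0 :: "real list set" where
  "W0 = {w. set w \<subseteq> {0, 1/4} \<and> (w = [] \<or> last w = 1/4)}"

definition partial_sum :: "real \<Rightarrow> (real \<Rightarrow> real) \<Rightarrow> nat \<Rightarrow> real \<Rightarrow> real" where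
  "partial_sum lam f n x =
     (\<Sum>w\<in>{w\<in>W0. length w \<le> n}. W_word lam w x * f (tau_word lam w x))"

end

theory Submission
  imports Defs
begin


definition FL :: "real \<Rightarrow> real set \<Rightarrow> real set" where
  "FL lam X = tauL lam 0 ` X \<union> tauL lam (1/4) ` X"

definition KL :: "real \<Rightarrow> nat \<Rightarrow> real set" where
  "KL lam n = (FL lam ^^ n) {0..lam/(4*(1-lam))}"

lemma FL_mono: "X \<subseteq> Y \<Longrightarrow> FL lam X \<subseteq> FL lam Y"
  unfolding FL_def by auto

lemma mem_tauL_image:
  assumes "lam \<noteq> 0"
  shows "x \<in> tauL lam d ` K \<longleftrightarrow> x/lam - d \<in> K"
proof
  assume "x \<in> tauL lam d ` K"
  then obtain y where "y \<in> K" "x = lam*(y+d)" unfolding tauL_def by auto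
  then show "x/lam - d \<in> K" using assms by simp
next
  assume "x/lam - d \<in> K"
  moreover have "x = tauL lam d (x/lam - d)" unfolding tauL_def using assms by simp
  ultimately show "x \<in> tauL lam d ` K" by blast
qed

lemma compact_FL: "compact X \<Longrightarrow> compact (FL lam X)"
  unfolding FL_def tauL_def
  by (intro compact_Un compact_continuous_image continuous_intros) auto

lemma FL_K0:
  assumes "0 < lam" "lam < 1"
  shows "FL lam {0..lam/(4*(1-lam))} \<subseteq> {0..lam/(4*(1-lam))}"
proof
  fix x assume "x \<in> FL lam {0..lam/(4*(1-lam))}"
  then have "\<exists>y\<in>{0..lam/(4*(1-lam))}. \<exists>d\<in>{0,1/4}. x = lam*(y+d)"
    unfolding FL_def tauL_def by auto
  then obtain y d where y0: "y \<in> {0..lam/(4*(1-lam))}" "d \<in> {0,1/4}" "x = lam*(y+d)"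
    by blast
  then have y: "0 \<le> y" "y \<le> lam/(4*(1-lam))" "d = 0 \<or> d = 1/4" "x = lam*(y+d)" by auto
  have c: "lam*(lam/(4*(1-lam)) + 1/4) = lam/(4*(1-lam))" using assms by (simp add: field_simps)
  have "x \<le> lam*(lam/(4*(1-lam)) + 1/4)" using y assms by (auto intro!: mult_left_mono)
  moreover have "0 \<le> x" using y assms by auto
  ultimately show "x \<in> {0..lam/(4*(1-lam))}" using c by simp
qed

lemma KL_Suc: "KL lam (Suc n) = FL lam (KL lam n)"
  unfolding KL_def by simp

lemma KL_decr:
  assumes "0 < lam" "lam < 1"
  shows "KL lam (Suc n) \<subseteq> KL lam n"
proof (induction n)
  case 0 then show ?case using FL_K0[OF assms] unfolding KL_def by simp
next
  case (Suc n) then show ?case unfolding KL_Suc by (rule FL_mono)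
qed

lemma KL_mono:
  assumes "0 < lam" "lam < 1" "m \<le> n"
  shows "KL lam n \<subseteq> KL lam m"
  using assms(3)
proof (induction n)
  case 0 then show ?case by simp
next
  case (Suc n)
  then show ?case
    using KL_decr[OF assms(1,2), of n] by (metis le_Suc_eq order_refl subset_trans)
qed

lemma KL_compact: "compact (KL lam n)"
  by (induction n) (auto simp: KL_def intro: compact_FL)

lemma KL_nonempty: "0 < lam \<Longrightarrow> lam < 1 \<Longrightarrow> KL lam n \<noteq> {}"
proof (induction n)
  case 0 then show ?case unfolding KL_def by simp
next
  case (Suc n) then show ?case unfolding KL_Suc FL_def by auto
qed

definition XLc :: "real \<Rightarrow> real set" where
  "XLc lam = (\<Inter>n. KL lam n)"

lemma XLc_fixed:
  assumes lam: "0 < lam" "lam < 1"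
  shows "compact (XLc lam) \<and> XLc lam \<noteq> {} \<and>
     XLc lam = tauL lam 0 ` XLc lam \<union> tauL lam (1/4) ` XLc lam"
proof -
  have c1: "compact (XLc lam)" unfolding XLc_def
    by (rule compact_Inter) (auto simp: KL_compact)
  have c2: "XLc lam \<noteq> {}" unfolding XLc_def
    by (rule compact_nest) (auto simp: KL_compact KL_nonempty[OF lam] KL_mono[OF lam])
  have "FL lam (XLc lam) \<subseteq> XLc lam"
  proof
    fix x assume x: "x \<in> FL lam (XLc lam)"
    have "x \<in> KL lam n" for n
    proof -
      have "XLc lam \<subseteq> KL lam n" unfolding XLc_def by blast
      then have "FL lam (XLc lam) \<subseteq> KL lam (Suc n)" unfolding KL_Suc by (rule FL_mono)
      then show "x \<in> KL lam n" using x KL_decr[OF lam, of n] by blast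
    qed
    then show "x \<in> XLc lam" unfolding XLc_def by blast
  qed
  moreover have "XLc lam \<subseteq> FL lam (XLc lam)"
  proof
    fix x assume x: "x \<in> XLc lam"
    have "\<forall>n. x \<in> KL lam (Suc n)" using x unfolding XLc_def by blast
    then have h: "\<forall>n. x/lam - 0 \<in> KL lam n \<or> x/lam - 1/4 \<in> KL lam n"
      unfolding KL_Suc FL_def using mem_tauL_image[of lam x] lam by auto
    show "x \<in> FL lam (XLc lam)"
    proof (cases "\<forall>n. x/lam - 0 \<in> KL lam n")
      case True
      then have "x/lam - 0 \<in> XLc lam" unfolding XLc_def by blast
      then show ?thesis unfolding FL_def using mem_tauL_image[of lam x 0 "XLc lam"] lam by auto
    next
      case False
      then obtain m where m: "x/lam - 0 \<notin> KL lam m" by blast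
      have "x/lam - 1/4 \<in> KL lam n" for n
      proof -
        have "x/lam - 0 \<notin> KL lam (max m n)" using m KL_mono[OF lam, of m "max m n"] by auto
        then have "x/lam - 1/4 \<in> KL lam (max m n)" using h by blast
        then show ?thesis using KL_mono[OF lam, of n "max m n"] by auto
      qed
      then have "x/lam - 1/4 \<in> XLc lam" unfolding XLc_def by blast
      then show ?thesis unfolding FL_def using mem_tauL_image[of lam x "1/4" "XLc lam"] lam by auto
    qed
  qed
  ultimately have "XLc lam = tauL lam 0 ` XLc lam \<union> tauL lam (1/4) ` XLc lam"
    unfolding FL_def by blast
  then show ?thesis using c1 c2 by blast
qed

lemma attractor_unique_sub:
  assumes lam: "0 < lam" "lam < 1"
    and X: "compact X" "X = tauL lam 0 ` X \<union> tauL lam (1/4) ` X"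
    and Y: "compact Y" "Y \<noteq> {}" "Y = tauL lam 0 ` Y \<union> tauL lam (1/4) ` Y"
  shows "X \<subseteq> Y"
proof
  obtain a where a: "\<forall>x\<in>X. \<bar>x\<bar> \<le> a" using compact_imp_bounded[OF X(1)]
    unfolding bounded_iff by auto
  obtain b where b: "\<forall>y\<in>Y. \<bar>y\<bar> \<le> b" using compact_imp_bounded[OF Y(1)]
    unfolding bounded_iff by auto
  define D where "D = a + b"
  have step: "\<forall>x\<in>X. \<exists>y\<in>Y. \<bar>x - y\<bar> \<le> lam^n * D" for n
  proof (induction n)
    case 0
    show ?case
    proof
      fix x assume "x \<in> X"
      obtain y where "y \<in> Y" using Y(2) by blast
      have "\<bar>x\<bar> \<le> a" "\<bar>y\<bar> \<le> b" using a b \<open>x \<in> X\<close> \<open>y \<in> Y\<close> by auto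
      then have "\<bar>x - y\<bar> \<le> lam^0 * D" unfolding D_def by simp
      then show "\<exists>y\<in>Y. \<bar>x - y\<bar> \<le> lam^0 * D" using \<open>y \<in> Y\<close> by blast
    qed
  next
    case (Suc n)
    show ?case
    proof
      fix x assume "x \<in> X"
      then obtain x' d where x': "x' \<in> X" "d = 0 \<or> d = 1/4" "x = tauL lam d x'"
        using X(2) by blast
      obtain y' where y': "y' \<in> Y" "\<bar>x' - y'\<bar> \<le> lam^n * D" using Suc x'(1) by blast
      have "tauL lam d y' \<in> Y" using Y(3) x'(2) y'(1) by blast
      moreover have "\<bar>x - tauL lam d y'\<bar> = lam * \<bar>x' - y'\<bar>"
        using x'(3) lam unfolding tauL_def by (simp add: abs_mult right_diff_distrib[symmetric])
      moreover have "lam * \<bar>x' - y'\<bar> \<le> lam^Suc n * D" using y'(2) lam by (simp add: mult_left_mono)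
      ultimately show "\<exists>y\<in>Y. \<bar>x - y\<bar> \<le> lam^Suc n * D" by (intro bexI[of _ "tauL lam d y'"]) auto
    qed
  qed
  fix x assume x: "x \<in> X"
  have "x \<in> closure Y"
    unfolding closure_approachable
  proof (intro allI impI)
    fix e :: real assume e: "0 < e"
    obtain n where n: "lam^n * D < e"
    proof (cases "D \<le> 0")
      case True then show ?thesis using that[of 0] e by simp
    next
      case False
      obtain n where "lam^n < e / D" using real_arch_pow_inv[of "e/D" lam] lam e False by auto
      then show ?thesis using that[of n] False by (simp add: field_simps)
    qed
    obtain y where "y \<in> Y" "\<bar>x - y\<bar> \<le> lam^n * D" using step x by blast
    then show "\<exists>y\<in>Y. dist y x < e" using n by (intro bexI[of _ y]) (auto simp: dist_real_def)
  qed
  then show "x \<in> Y" using compact_imp_closed[OF Y(1)] by (simp add: closure_closed)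
qed

lemma XL_eq:
  assumes lam: "0 < lam" "lam < 1"
  shows "XL lam = XLc lam"
  unfolding XL_def
proof (rule the_equality)
  show "compact (XLc lam) \<and> XLc lam \<noteq> {} \<and> XLc lam = tauL lam 0 ` XLc lam \<union> tauL lam (1 / 4) ` XLc lam"
    using XLc_fixed[OF lam] .
  fix X assume X: "compact X \<and> X \<noteq> {} \<and> X = tauL lam 0 ` X \<union> tauL lam (1 / 4) ` X"
  have f: "compact (XLc lam)" "XLc lam \<noteq> {}" "XLc lam = tauL lam 0 ` XLc lam \<union> tauL lam (1 / 4) ` XLc lam"
    using XLc_fixed[OF lam] by auto
  have Xs: "compact X" "X \<noteq> {}" "X = tauL lam 0 ` X \<union> tauL lam (1 / 4) ` X" using X by auto
  show "X = XLc lam"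
    by (rule subset_antisym[OF attractor_unique_sub[OF lam Xs(1) Xs(3) f] attractor_unique_sub[OF lam f(1) f(3) Xs]])
qed

lemma XL_props:
  assumes lam: "0 < lam" "lam < 1"
  shows "compact (XL lam)" "XL lam \<noteq> {}" "\<And>x. x \<in> XL lam \<Longrightarrow> tauL lam 0 x \<in> XL lam"
    "\<And>x. x \<in> XL lam \<Longrightarrow> tauL lam (1/4) x \<in> XL lam" "XL lam \<subseteq> {0..}"
proof -
  note f = XLc_fixed[OF lam, folded XL_eq[OF lam]]
  show "compact (XL lam)" "XL lam \<noteq> {}" using f by auto
  show "\<And>x. x \<in> XL lam \<Longrightarrow> tauL lam 0 x \<in> XL lam"
       "\<And>x. x \<in> XL lam \<Longrightarrow> tauL lam (1/4) x \<in> XL lam" using f by blast+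
  have "XLc lam \<subseteq> KL lam 0" unfolding XLc_def by blast
  then show "XL lam \<subseteq> {0..}" unfolding XL_eq[OF lam] KL_def by auto
qed

lemma zero_in_XL:
  assumes lam: "0 < lam" "lam < 1"
  shows "0 \<in> XL lam"
proof -
  obtain x where x: "x \<in> XL lam" using XL_props(2)[OF lam] by blast
  have "lam^n * x \<in> XL lam" for n
  proof (induction n)
    case 0 then show ?case using x by simp
  next
    case (Suc n)
    then have "tauL lam 0 (lam^n * x) \<in> XL lam" using XL_props(3)[OF lam] by blast
    then show ?case unfolding tauL_def by (simp add: mult.assoc)
  qed
  moreover have "(\<lambda>n. lam^n * x) \<longlonglongrightarrow> 0"
    using LIMSEQ_power_zero[of lam] lam by (intro tendsto_mult_left_zero) auto
  ultimately show ?thesis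
    using closed_sequentially[OF compact_imp_closed[OF XL_props(1)[OF lam]], of "\<lambda>n. lam^n * x" 0] by simp
qed



definition Upm :: "real measure" where "Upm = measure_pmf (pmf_of_set {-1, 1})"

definition selfsim :: "real \<Rightarrow> real measure \<Rightarrow> bool" where
  "selfsim lam M \<longleftrightarrow> (prob_space M \<and> sets M = sets borel \<and>
     (\<forall>A\<in>sets borel.
        emeasure M A = (emeasure M ((\<lambda>x. lam * x + 1) -` A)
                       + emeasure M ((\<lambda>x. lam * x - 1) -` A)) / 2))"

lemma nu_def': "nu lam = (THE M. selfsim lam M)"
  unfolding nu_def selfsim_def by simp

lemma Upm_prob: "prob_space Upm"
  unfolding Upm_def by (rule prob_space_measure_pmf)

lemma nn_integral_Upm: "(\<integral>\<^sup>+s. f s \<partial>Upm) = (f (-1) + f 1) / 2"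
proof -
  have "(\<integral>\<^sup>+s. f s \<partial>Upm) = sum f {-1, 1} / card {-1, 1::real}"
    unfolding Upm_def by (rule nn_integral_pmf_of_set) auto
  then show ?thesis by simp
qed

lemma integral_Upm: "(\<integral>s. f s \<partial>Upm) = (f (-1) + f 1) / (2::complex)"
proof -
  have "(\<integral>s. f s \<partial>Upm) = (\<Sum>a\<in>{-1,1}. pmf (pmf_of_set {-1,1::real}) a *\<^sub>R f a)"
    unfolding Upm_def by (rule integral_measure_pmf) auto
  then show ?thesis by (simp add: scaleR_conv_of_real field_simps)
qed

lemma selfsim_real_distribution: "selfsim lam N \<Longrightarrow> real_distribution N"
  unfolding selfsim_def real_distribution_def real_distribution_axioms_def by auto

lemma selfsim_mix:
  assumes N: "selfsim lam N"
  shows "N = distr (Upm \<Otimes>\<^sub>M N) borel (\<lambda>z. lam * snd z + fst z)"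
proof -
  interpret N: prob_space N using N unfolding selfsim_def by auto
  have setsN[measurable_cong]: "sets N = sets borel" using N unfolding selfsim_def by auto
  have spN: "space N = UNIV" using sets_eq_imp_space_eq[OF setsN] by simp
  have meas: "(\<lambda>z. lam * snd z + fst z) \<in> borel_measurable (Upm \<Otimes>\<^sub>M N)"
  proof -
    have "fst \<in> measurable (Upm \<Otimes>\<^sub>M N) Upm" by (rule measurable_fst)
    moreover have "(\<lambda>x. x) \<in> borel_measurable Upm" unfolding Upm_def by simp
    ultimately have f: "fst \<in> borel_measurable (Upm \<Otimes>\<^sub>M N)"
      using measurable_compose by blast
    have "snd \<in> measurable (Upm \<Otimes>\<^sub>M N) N" by (rule measurable_snd)
    then have s: "snd \<in> borel_measurable (Upm \<Otimes>\<^sub>M N)"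
      using measurable_cong_sets[OF refl setsN] by blast
    show ?thesis using f s by measurable
  qed
  show ?thesis
  proof (rule measure_eqI)
    show "sets N = sets (distr (Upm \<Otimes>\<^sub>M N) borel (\<lambda>z. lam * snd z + fst z))"
      using setsN by simp
    fix A assume A: "A \<in> sets N"
    then have Ab: "A \<in> sets borel" using setsN by simp
    have pre: "(\<lambda>z. lam * snd z + fst z) -` A \<inter> space (Upm \<Otimes>\<^sub>M N) \<in> sets (Upm \<Otimes>\<^sub>M N)"
      using measurable_sets[OF meas Ab] .
    have "emeasure (distr (Upm \<Otimes>\<^sub>M N) borel (\<lambda>z. lam * snd z + fst z)) A
        = emeasure (Upm \<Otimes>\<^sub>M N) ((\<lambda>z. lam * snd z + fst z) -` A \<inter> space (Upm \<Otimes>\<^sub>M N))"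
      by (rule emeasure_distr[OF meas Ab])
    also have "\<dots> = (\<integral>\<^sup>+s. emeasure N (Pair s -` ((\<lambda>z. lam * snd z + fst z) -` A \<inter> space (Upm \<Otimes>\<^sub>M N))) \<partial>Upm)"
      by (rule N.emeasure_pair_measure_alt[OF pre])
    also have "\<dots> = (\<integral>\<^sup>+s. emeasure N ((\<lambda>x. lam * x + s) -` A) \<partial>Upm)"
      by (intro nn_integral_cong arg_cong[where f="emeasure N"]) (auto simp: space_pair_measure spN Upm_def)
    also have "\<dots> = (emeasure N ((\<lambda>x. lam * x + 1) -` A) + emeasure N ((\<lambda>x. lam * x - 1) -` A)) / 2"
      by (simp add: nn_integral_Upm add.commute)
    also have "\<dots> = emeasure N A" using N Ab unfolding selfsim_def by auto
    finally show "emeasure N A = emeasure (distr (Upm \<Otimes>\<^sub>M N) borel (\<lambda>z. lam * snd z + fst z)) A" by simp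
  qed
qed

lemma iexp_cos: "(iexp (-t) + iexp t) / 2 = complex_of_real (cos t)"
proof -
  have h: "\<And>x. iexp x = cis x" by (simp add: cis_conv_exp)
  show ?thesis by (simp only: h) (simp add: complex_eq_iff)
qed

lemma selfsim_char:
  assumes N: "selfsim lam N"
  shows "char N t = complex_of_real (cos t) * char N (lam * t)"
proof -
  interpret N: prob_space N using N unfolding selfsim_def by auto
  have setsN[measurable_cong]: "sets N = sets borel" using N unfolding selfsim_def by auto
  interpret U: prob_space Upm by (rule Upm_prob)
  interpret P: pair_sigma_finite Upm N ..
  interpret UN: prob_space "Upm \<Otimes>\<^sub>M N" by (rule prob_space_pair) unfold_locales
  have meas: "(\<lambda>z. lam * snd z + fst z) \<in> borel_measurable (Upm \<Otimes>\<^sub>M N)"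
  proof -
    have "fst \<in> measurable (Upm \<Otimes>\<^sub>M N) Upm" by (rule measurable_fst)
    moreover have "(\<lambda>x. x) \<in> borel_measurable Upm" unfolding Upm_def by simp
    ultimately have f: "fst \<in> borel_measurable (Upm \<Otimes>\<^sub>M N)"
      using measurable_compose by blast
    have "snd \<in> measurable (Upm \<Otimes>\<^sub>M N) N" by (rule measurable_snd)
    then have s: "snd \<in> borel_measurable (Upm \<Otimes>\<^sub>M N)"
      using measurable_cong_sets[OF refl setsN] by blast
    show ?thesis using f s by measurable
  qed
  have "char N t = (CLINT x|distr (Upm \<Otimes>\<^sub>M N) borel (\<lambda>z. lam * snd z + fst z). iexp (t * x))"
    unfolding char_def by (subst selfsim_mix[OF N]) rule
  also have "\<dots> = (CLINT z|Upm \<Otimes>\<^sub>M N. iexp (t * (lam * snd z + fst z)))"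
    by (rule integral_distr[OF meas]) measurable
  also have "\<dots> = (CLINT s|Upm. (CLINT x|N. iexp (t * (lam * x + s))))"
  proof -
    have mi: "(\<lambda>z. iexp (t * (lam * snd z + fst z))) \<in> borel_measurable (Upm \<Otimes>\<^sub>M N)"
      using meas by measurable
    have "integrable (Upm \<Otimes>\<^sub>M N) (\<lambda>z. iexp (t * (lam * snd z + fst z)))"
      by (rule UN.integrable_const_bound[where B=1]) (use mi in \<open>auto simp del: of_real_mult\<close>)
    from P.integral_fst'[OF this]
    have "(CLINT s|Upm. (CLINT x|N. iexp (t * (lam * x + s)))) = (CLINT z|Upm \<Otimes>\<^sub>M N. iexp (t * (lam * snd z + fst z)))"
      by simp
    then show ?thesis by simp
  qed
  also have "\<dots> = (CLINT s|Upm. iexp (t * s) * char N (lam * t))"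
  proof (rule Bochner_Integration.integral_cong[OF refl])
    fix s
    have "(CLINT x|N. iexp (t * (lam * x + s))) = (CLINT x|N. iexp ((lam * t) * x) * iexp (t * s))"
      by (rule Bochner_Integration.integral_cong[OF refl]) (simp add: algebra_simps exp_add[symmetric])
    also have "\<dots> = (CLINT x|N. iexp ((lam * t) * x)) * iexp (t * s)"
      by (rule integral_mult_left_zero)
    finally show "(CLINT x|N. iexp (t * (lam * x + s))) = iexp (t * s) * char N (lam * t)"
      unfolding char_def by simp
  qed
  also have "\<dots> = (iexp (-t) * char N (lam * t) + iexp t * char N (lam * t)) / 2"
    by (simp add: integral_Upm distrib_right)
  also have "\<dots> = ((iexp (-t) + iexp t) / 2) * char N (lam * t)"
    by (simp only: distrib_right times_divide_eq_left)
  also have "\<dots> = complex_of_real (cos t) * char N (lam * t)"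
    by (simp only: iexp_cos)
  finally show ?thesis .
qed

lemma selfsim_unique:
  assumes lam: "0 < lam" "lam < 1" and N1: "selfsim lam N1" and N2: "selfsim lam N2"
  shows "N1 = N2"
proof -
  interpret R1: real_distribution N1 using selfsim_real_distribution[OF N1] .
  interpret R2: real_distribution N2 using selfsim_real_distribution[OF N2] .
  define D where "D t = char N1 t - char N2 t" for t
  have Drec: "D t = complex_of_real (cos t) * D (lam * t)" for t
    unfolding D_def using selfsim_char[OF N1, of t] selfsim_char[OF N2, of t]
    by (simp add: right_diff_distrib)
  have bound: "\<forall>t. norm (D t) \<le> norm (D (lam^n * t))" for n
  proof (induction n)
    case 0 then show ?case by simp
  next
    case (Suc n)
    show ?case
    proof
      fix t
      have "norm (D t) = \<bar>cos t\<bar> * norm (D (lam * t))"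
        by (subst Drec) (simp add: norm_mult)
      also have "\<dots> \<le> norm (D (lam * t))"
        by (rule mult_left_le_one_le) auto
      also have "\<dots> \<le> norm (D (lam^n * (lam * t)))" using Suc by blast
      finally show "norm (D t) \<le> norm (D (lam^Suc n * t))" by (simp add: mult_ac)
    qed
  qed
  have contD: "isCont D 0" unfolding D_def
    using R1.isCont_char R2.isCont_char by (intro continuous_intros) auto
  have D0: "D 0 = 0" unfolding D_def using R1.char_zero R2.char_zero by simp
  have "char N1 = char N2"
  proof
    fix t
    have "(\<lambda>n. lam^n * t) \<longlonglongrightarrow> 0"
      using LIMSEQ_power_zero[of lam] lam by (intro tendsto_mult_left_zero) auto
    then have "(\<lambda>n. D (lam^n * t)) \<longlonglongrightarrow> D 0" using contD isCont_tendsto_compose by blast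
    then have "(\<lambda>n. norm (D (lam^n * t))) \<longlonglongrightarrow> 0" using D0 tendsto_norm by fastforce
    then have "norm (D t) \<le> 0" using bound by (intro LIMSEQ_le_const) auto
    then show "char N1 t = char N2 t" unfolding D_def by simp
  qed
  then show ?thesis
    using Levy_uniqueness[OF selfsim_real_distribution[OF N1] selfsim_real_distribution[OF N2]] by blast
qed

definition coef :: "real \<Rightarrow> real" where "coef v = (if v = 1 then 1 else -1)"

definition Xf :: "real \<Rightarrow> real stream \<Rightarrow> real" where
  "Xf lam \<omega> = (\<Sum>k. coef (\<omega> !! k) * lam^k)"

lemma abs_coef[simp]: "\<bar>coef v\<bar> = 1" unfolding coef_def by simp

lemma Xf_summable:
  assumes "0 < lam" "lam < 1"
  shows "summable (\<lambda>k. coef (\<omega> !! k) * lam^k)"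
proof (rule summable_comparison_test[OF _ summable_geometric[of lam]])
  show "\<exists>N. \<forall>n\<ge>N. norm (coef (\<omega> !! n) * lam ^ n) \<le> lam ^ n"
    using assms by (simp add: abs_mult)
  show "norm lam < 1" using assms by simp
qed

lemma Xf_Cons:
  assumes "0 < lam" "lam < 1"
  shows "Xf lam (s ## \<omega>) = coef s + lam * Xf lam \<omega>"
proof -
  have sm: "summable (\<lambda>k. coef ((s ## \<omega>) !! k) * lam^k)" by (rule Xf_summable[OF assms])
  have "(\<Sum>n. coef ((s ## \<omega>) !! Suc n) * lam^Suc n) = (\<Sum>n. lam * (coef (\<omega> !! n) * lam^n))"
    by (simp add: mult_ac)
  also have "\<dots> = lam * Xf lam \<omega>" unfolding Xf_def
    by (rule suminf_mult[OF Xf_summable[OF assms]])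
  finally have "Xf lam (s ## \<omega>) - coef s = lam * Xf lam \<omega>"
    using suminf_split_head[OF sm] unfolding Xf_def by simp
  then show ?thesis by simp
qed

lemma Xf_meas:
  assumes "0 < lam" "lam < 1"
  shows "Xf lam \<in> borel_measurable (stream_space Upm)"
proof (rule borel_measurable_LIMSEQ_real)
  fix \<omega>
  show "(\<lambda>n. \<Sum>k<n. coef (\<omega> !! k) * lam^k) \<longlonglongrightarrow> Xf lam \<omega>"
    unfolding Xf_def by (rule summable_LIMSEQ[OF Xf_summable[OF assms]])
next
  fix n
  have m: "(\<lambda>\<omega>. coef (\<omega> !! k) * lam^k) \<in> borel_measurable (stream_space Upm)" for k
  proof -
    have "(\<lambda>\<omega>. \<omega> !! k) \<in> measurable (stream_space Upm) Upm" by (rule measurable_snth)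
    moreover have "coef \<in> borel_measurable Upm" by (simp add: Upm_def)
    ultimately have "(\<lambda>\<omega>. coef (\<omega> !! k)) \<in> borel_measurable (stream_space Upm)"
      using measurable_compose by blast
    then show ?thesis by measurable
  qed
  show "(\<lambda>\<omega>. \<Sum>k<n. coef (\<omega> !! k) * lam^k) \<in> borel_measurable (stream_space Upm)"
    using m by (intro borel_measurable_sum) auto
qed

definition nu0 :: "real \<Rightarrow> real measure" where
  "nu0 lam = distr (stream_space Upm) borel (Xf lam)"

lemma nu0_emeasure:
  assumes "0 < lam" "lam < 1" "B \<in> sets borel"
  shows "emeasure (nu0 lam) B = (\<integral>\<^sup>+\<omega>. indicator B (Xf lam \<omega>) \<partial>stream_space Upm)"
proof -
  have "emeasure (nu0 lam) B = (\<integral>\<^sup>+x. indicator B x \<partial>nu0 lam)"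
    using assms(3) by (simp add: nu0_def)
  also have "\<dots> = (\<integral>\<^sup>+\<omega>. indicator B (Xf lam \<omega>) \<partial>stream_space Upm)"
    unfolding nu0_def using assms(3) by (subst nn_integral_distr[OF Xf_meas[OF assms(1,2)]]) auto
  finally show ?thesis .
qed

lemma nu0_selfsim:
  assumes lam: "0 < lam" "lam < 1"
  shows "selfsim lam (nu0 lam)"
proof -
  interpret U: prob_space Upm by (rule Upm_prob)
  interpret S: prob_space "stream_space Upm" by (rule U.prob_space_stream_space)
  have "prob_space (nu0 lam)" unfolding nu0_def by (rule S.prob_space_distr[OF Xf_meas[OF lam]])
  moreover have "sets (nu0 lam) = sets borel" unfolding nu0_def by simp
  moreover have "emeasure (nu0 lam) A = (emeasure (nu0 lam) ((\<lambda>x. lam * x + 1) -` A)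
                       + emeasure (nu0 lam) ((\<lambda>x. lam * x - 1) -` A)) / 2" if A: "A \<in> sets borel" for A
  proof -
    have pre: "(\<lambda>x. lam * x + c) -` A \<in> sets borel" for c
    proof -
      have "(\<lambda>x. lam * x + c) \<in> borel_measurable borel" by measurable
      from measurable_sets[OF this A] show ?thesis by simp
    qed
    have mX: "Xf lam \<in> borel_measurable (stream_space Upm)" by (rule Xf_meas[OF lam])
    have "emeasure (nu0 lam) A = (\<integral>\<^sup>+\<omega>. indicator A (Xf lam \<omega>) \<partial>stream_space Upm)"
      by (rule nu0_emeasure[OF lam A])
    also have "\<dots> = (\<integral>\<^sup>+s. (\<integral>\<^sup>+\<omega>. indicator A (Xf lam (s ## \<omega>)) \<partial>stream_space Upm) \<partial>Upm)"
      by (rule U.nn_integral_stream_space) (use mX A in measurable)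
    also have "\<dots> = (\<integral>\<^sup>+s. emeasure (nu0 lam) ((\<lambda>x. lam * x + coef s) -` A) \<partial>Upm)"
    proof (rule nn_integral_cong)
      fix s
      have "(\<integral>\<^sup>+\<omega>. indicator A (Xf lam (s ## \<omega>)) \<partial>stream_space Upm)
          = (\<integral>\<^sup>+\<omega>. indicator ((\<lambda>x. lam * x + coef s) -` A) (Xf lam \<omega>) \<partial>stream_space Upm)"
        by (rule nn_integral_cong) (simp add: Xf_Cons[OF lam] indicator_def add.commute)
      also have "\<dots> = emeasure (nu0 lam) ((\<lambda>x. lam * x + coef s) -` A)"
        by (rule nu0_emeasure[OF lam pre, symmetric])
      finally show "(\<integral>\<^sup>+\<omega>. indicator A (Xf lam (s ## \<omega>)) \<partial>stream_space Upm)
          = emeasure (nu0 lam) ((\<lambda>x. lam * x + coef s) -` A)" .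
    qed
    also have "\<dots> = (emeasure (nu0 lam) ((\<lambda>x. lam * x - 1) -` A) + emeasure (nu0 lam) ((\<lambda>x. lam * x + 1) -` A)) / 2"
      by (simp add: nn_integral_Upm coef_def)
    finally show ?thesis by (simp add: add.commute)
  qed
  ultimately show ?thesis unfolding selfsim_def by blast
qed

lemma nu_selfsim:
  assumes lam: "0 < lam" "lam < 1"
  shows "selfsim lam (nu lam)"
proof -
  have "\<exists>!M. selfsim lam M"
    using nu0_selfsim[OF lam] selfsim_unique[OF lam] by blast
  then show ?thesis unfolding nu_def' by (rule theI')
qed

lemma nu_hat_char: "nu_hat lam t = char (nu lam) (2 * pi * t)"
  unfolding nu_hat_def char_def
  by (rule Bochner_Integration.integral_cong[OF refl]) (simp add: cis_conv_exp mult_ac)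

lemma G_props:
  assumes lam: "0 < lam" "lam < 1"
  defines "G \<equiv> (\<lambda>x. (cmod (nu_hat lam x))^2)"
  shows "continuous_on UNIV G" "G 0 = 1" "\<And>x. 0 \<le> G x" "\<And>x. G x \<le> 1"
    "\<And>x. G x = (cos (2 * pi * x))^2 * G (lam * x)"
proof -
  have N: "selfsim lam (nu lam)" by (rule nu_selfsim[OF lam])
  interpret R: real_distribution "nu lam" using selfsim_real_distribution[OF N] .
  have c: "isCont (\<lambda>x. nu_hat lam x) x" for x
    unfolding nu_hat_char
    by (rule continuous_at_compose[unfolded o_def, OF _ R.isCont_char]) (intro continuous_intros)
  show "continuous_on UNIV G" unfolding G_def
    using c by (intro continuous_at_imp_continuous_on ballI continuous_intros) auto
  show "G 0 = 1" unfolding G_def nu_hat_char using R.char_zero by simp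
  show "\<And>x. 0 \<le> G x" unfolding G_def by simp
  show "\<And>x. G x \<le> 1" unfolding G_def nu_hat_char
    using R.cmod_char_le_1 by (simp add: power_le_one)
  show "\<And>x. G x = (cos (2 * pi * x))^2 * G (lam * x)"
  proof -
    fix x
    have "nu_hat lam x = complex_of_real (cos (2 * pi * x)) * nu_hat lam (lam * x)"
      unfolding nu_hat_char using selfsim_char[OF N, of "2*pi*x"] by (simp add: mult_ac)
    then show "G x = (cos (2 * pi * x))^2 * G (lam * x)"
      unfolding G_def by (simp add: norm_mult power_mult_distrib)
  qed
qed



lemma tau_word_Cons: "tau_word lam (d # w) x = tau_word lam w (tauL lam d x)"
  unfolding tau_word_def by simp

lemma tau_word_Nil: "tau_word lam [] x = x"
  unfolding tau_word_def by simp

lemma W_word_Nil: "W_word lam [] x = 1"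
  unfolding W_word_def by simp

lemma W_word_Cons: "W_word lam (d # w) x = Wf lam (tauL lam d x) * W_word lam w (tauL lam d x)"
proof -
  have "W_word lam (d # w) x = (\<Prod>k\<in>{1..Suc (length w)}. Wf lam (tau_word lam (take k (d # w)) x))"
    unfolding W_word_def by simp
  also have "\<dots> = Wf lam (tau_word lam (take 1 (d # w)) x) *
      (\<Prod>k\<in>{Suc 1..Suc (length w)}. Wf lam (tau_word lam (take k (d # w)) x))"
    by (rule prod.atLeast_Suc_atMost) simp
  also have "(\<Prod>k\<in>{Suc 1..Suc (length w)}. Wf lam (tau_word lam (take k (d # w)) x))
      = (\<Prod>k\<in>{1..length w}. Wf lam (tau_word lam (take (Suc k) (d # w)) x))"
    by (rule prod.shift_bounds_cl_Suc_ivl)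
  also have "\<dots> = W_word lam w (tauL lam d x)"
    unfolding W_word_def by (simp add: tau_word_Cons)
  finally show ?thesis by (simp add: tau_word_Cons tau_word_Nil)
qed

lemma W_word_nonneg: "0 \<le> W_word lam w x"
  unfolding W_word_def Wf_def by (intro prod_nonneg) simp

definition WS :: "nat \<Rightarrow> real list set" where "WS n = {w\<in>W0. length w \<le> n}"

lemma finite_WS: "finite (WS n)"
proof -
  have "WS n \<subseteq> {xs. set xs \<subseteq> {0, 1/4} \<and> length xs \<le> n}"
    unfolding WS_def W0_def by auto
  moreover have "finite {xs. set xs \<subseteq> {0::real, 1/4} \<and> length xs \<le> n}"
    by (rule finite_lists_length_le) simp
  ultimately show ?thesis by (rule finite_subset)
qed

lemma WS_0: "WS 0 = {[]}"
  unfolding WS_def W0_def by auto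

lemma WS_Suc: "WS (Suc n) = insert [] ((Cons 0) ` (WS n - {[]}) \<union> (Cons (1/4)) ` WS n)"
proof (intro equalityI subsetI)
  fix w assume w: "w \<in> WS (Suc n)"
  show "w \<in> insert [] ((Cons 0) ` (WS n - {[]}) \<union> (Cons (1/4)) ` WS n)"
  proof (cases w)
    case Nil then show ?thesis by simp
  next
    case (Cons d w')
    have d: "d = 0 \<or> d = 1/4" and sw: "set w' \<subseteq> {0, 1/4}" and len: "length w' \<le> n"
      using w Cons unfolding WS_def W0_def by auto
    have lst: "last (d # w') = 1/4" using w Cons unfolding WS_def W0_def by auto
    show ?thesis
    proof (cases "w' = []")
      case True
      then have "d = 1/4" using lst by simp
      moreover have "w' \<in> WS n" using True unfolding WS_def W0_def by simp
      ultimately show ?thesis using Cons by blast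
    next
      case False
      then have "last w' = 1/4" using lst by simp
      then have "w' \<in> WS n" using sw len unfolding WS_def W0_def by simp
      then show ?thesis using Cons d False by blast
    qed
  qed
next
  fix w assume "w \<in> insert [] ((Cons 0) ` (WS n - {[]}) \<union> (Cons (1/4)) ` WS n)"
  then show "w \<in> WS (Suc n)" unfolding WS_def W0_def by (auto split: if_splits)
qed

definition Tm :: "real \<Rightarrow> (real \<Rightarrow> real) \<Rightarrow> real \<Rightarrow> real list \<Rightarrow> real" where
  "Tm lam f x w = W_word lam w x * f (tau_word lam w x)"

lemma partial_sum_WS: "partial_sum lam f n x = (\<Sum>w\<in>WS n. Tm lam f x w)"
  unfolding partial_sum_def WS_def Tm_def by simp

lemma Tm_Cons: "Tm lam f x (d # w) = Wf lam (tauL lam d x) * Tm lam f (tauL lam d x) w"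
  unfolding Tm_def by (simp add: W_word_Cons tau_word_Cons)

lemma Tm_Nil: "Tm lam f x [] = f x"
  unfolding Tm_def by (simp add: W_word_Nil tau_word_Nil)

lemma partial_sum_0: "partial_sum lam f 0 x = f x"
  unfolding partial_sum_WS WS_0 by (simp add: Tm_Nil)

lemma partial_sum_Suc:
  "partial_sum lam f (Suc n) x = f x
     + Wf lam (tauL lam 0 x) * (partial_sum lam f n (tauL lam 0 x) - f (tauL lam 0 x))
     + Wf lam (tauL lam (1/4) x) * partial_sum lam f n (tauL lam (1/4) x)"
proof -
  have fin: "finite (WS n)" by (rule finite_WS)
  have nil: "[] \<in> WS n" unfolding WS_def W0_def by simp
  have d1: "[] \<notin> (Cons 0) ` (WS n - {[]}) \<union> (Cons (1/4)) ` WS n" by auto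
  have d2: "(Cons 0) ` (WS n - {[]}) \<inter> (Cons (1/4)) ` WS n = {}" by auto
  have "partial_sum lam f (Suc n) x = Tm lam f x [] +
      (\<Sum>w\<in>(Cons 0) ` (WS n - {[]}) \<union> (Cons (1/4)) ` WS n. Tm lam f x w)"
    unfolding partial_sum_WS WS_Suc using fin d1 by (subst sum.insert) auto
  also have "(\<Sum>w\<in>(Cons 0) ` (WS n - {[]}) \<union> (Cons (1/4)) ` WS n. Tm lam f x w)
      = (\<Sum>w\<in>(Cons 0) ` (WS n - {[]}). Tm lam f x w) + (\<Sum>w\<in>(Cons (1/4)) ` WS n. Tm lam f x w)"
    using fin d2 by (intro sum.union_disjoint) auto
  also have "(\<Sum>w\<in>(Cons 0) ` (WS n - {[]}). Tm lam f x w) = (\<Sum>w\<in>WS n - {[]}. Tm lam f x (0 # w))"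
    by (subst sum.reindex) (auto simp: inj_on_def)
  also have "\<dots> = Wf lam (tauL lam 0 x) * (\<Sum>w\<in>WS n - {[]}. Tm lam f (tauL lam 0 x) w)"
    by (simp add: Tm_Cons sum_distrib_left)
  also have "(\<Sum>w\<in>WS n - {[]}. Tm lam f (tauL lam 0 x) w) = partial_sum lam f n (tauL lam 0 x) - f (tauL lam 0 x)"
    unfolding partial_sum_WS using fin nil by (simp add: sum_diff1 Tm_Nil)
  also have "(\<Sum>w\<in>(Cons (1/4)) ` WS n. Tm lam f x w) = (\<Sum>w\<in>WS n. Tm lam f x ((1/4) # w))"
    by (subst sum.reindex) (auto simp: inj_on_def)
  also have "\<dots> = Wf lam (tauL lam (1/4) x) * partial_sum lam f n (tauL lam (1/4) x)"
    unfolding partial_sum_WS by (simp add: Tm_Cons sum_distrib_left)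
  finally show ?thesis by (simp add: Tm_Nil)
qed

lemma Wf_tau0: "lam \<noteq> 0 \<Longrightarrow> Wf lam (tauL lam 0 x) = (cos (2 * pi * x))^2"
  unfolding Wf_def tauL_def by (simp add: mult.assoc)

lemma Wf_tau1: "lam \<noteq> 0 \<Longrightarrow> Wf lam (tauL lam (1/4) x) = (sin (2 * pi * x))^2"
proof -
  assume "lam \<noteq> 0"
  then have "2 * pi * (lam * (x + 1/4)) / lam = 2 * pi * x + pi/2" by (simp add: field_simps)
  then have "Wf lam (tauL lam (1/4) x) = (cos (2 * pi * x + pi/2))^2"
    unfolding Wf_def tauL_def by simp
  also have "\<dots> = (sin (2 * pi * x))^2" by (simp add: cos_add)
  finally show ?thesis .
qed

lemma partial_sum_mono:
  assumes "\<And>y. 0 \<le> f y"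
  shows "partial_sum lam f n x \<le> partial_sum lam f (Suc n) x"
  unfolding partial_sum_WS
proof (rule sum_mono2[OF finite_WS])
  show "WS n \<subseteq> WS (Suc n)" unfolding WS_def by auto
  fix b show "0 \<le> Tm lam f x b"
    unfolding Tm_def using assms W_word_nonneg by (simp add: mult_nonneg_nonneg)
qed



lemma exists_pow_lt:
  fixes lam Q Ys :: real
  assumes "0 < lam" "lam < 1" "0 < Ys"
  shows "\<exists>n. lam^n * Q < Ys"
proof (cases "Q \<le> 0")
  case True then show ?thesis using assms by (intro exI[of _ 0]) auto
next
  case False
  obtain n where "lam^n < Ys / Q" using real_arch_pow_inv[of "Ys/Q" lam] assms False by auto
  then show ?thesis using False by (intro exI[of _ n]) (simp add: field_simps)
qed

lemma no_int_between:
  fixes a b :: int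
  assumes "real_of_int a < real_of_int b" "real_of_int b < real_of_int a + 1"
  shows False
proof -
  have "a < b" using assms(1) by simp
  moreover have "real_of_int b < real_of_int (a + 1)" using assms(2) by simp
  then have "b < a + 1" by (simp only: of_int_less_iff)
  ultimately show False by simp
qed

lemma descent:
  fixes lam Ys :: real and M :: "real set" and k :: int
  assumes lam: "0 < lam" "lam < 1"
    and Ys: "Ys = 2 * real_of_int k + 1" "Ys \<in> M" "\<forall>Y\<in>M. Ys \<le> Y" "0 < Ys"
    and A: "\<forall>Y\<in>M. (\<nexists>j::int. Y = 2 * real_of_int j + 1) \<longrightarrow> lam*Y \<in> M"
  shows "\<forall>Q\<in>M. Q < Ys + 2 \<longrightarrow> lam^n * Q < Ys \<longrightarrow> (\<exists>i. lam^i*Q = Ys \<and> (\<forall>j\<le>i. lam^j*Q \<in> M))"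
proof (induction n)
  case 0
  then show ?case using Ys by force
next
  case (Suc n)
  show ?case
  proof (intro ballI impI)
    fix Q assume Q: "Q \<in> M" "Q < Ys + 2" "lam ^ Suc n * Q < Ys"
    show "\<exists>i. lam^i*Q = Ys \<and> (\<forall>j\<le>i. lam^j*Q \<in> M)"
    proof (cases "\<exists>j::int. Q = 2 * real_of_int j + 1")
      case True
      then obtain j::int where j: "Q = 2 * real_of_int j + 1" by blast
      have "Ys \<le> Q" using Ys Q by auto
      then have "k \<le> j" "j < k + 1" using j Ys Q by linarith+
      then have "j = k" by linarith
      then have "Q = Ys" using j Ys by simp
      then show ?thesis using Q by (intro exI[of _ 0]) auto
    next
      case False
      then have M1: "lam*Q \<in> M" using A Q by blast
      have "Ys \<le> Q" using Ys Q by auto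
      have "0 \<le> Q" using Q \<open>Ys \<le> Q\<close> Ys by linarith
      then have "lam*Q \<le> Q" using lam by (simp add: mult_left_le_one_le)
      then have "lam*Q < Ys + 2" using Q by simp
      moreover have "lam^n * (lam*Q) < Ys" using Q by (simp add: mult.assoc mult.left_commute)
      ultimately obtain i where i: "lam^i*(lam*Q) = Ys" "\<forall>j\<le>i. lam^j*(lam*Q) \<in> M"
        using Suc.IH M1 by blast
      have "lam^(Suc i) * Q = Ys" using i by (simp add: mult.assoc mult.commute mult.left_commute)
      moreover have "\<forall>j\<le>Suc i. lam^j*Q \<in> M"
      proof (intro allI impI)
        fix j assume "j \<le> Suc i"
        show "lam^j*Q \<in> M"
        proof (cases j)
          case 0 then show ?thesis using Q by simp
        next
          case (Suc j') then show ?thesis using i(2) \<open>j \<le> Suc i\<close>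
            by (metis Suc_le_mono mult.assoc mult.commute power_Suc)
        qed
      qed
      ultimately show ?thesis by blast
    qed
  qed
qed

lemma combo:
  fixes lam Ys :: real and M :: "real set"
  assumes lam: "0 < lam" "lam < 1"
    and excl: "\<forall>k::nat. lam \<noteq> (2*k+1)/(2*k+2)"
    and Ys: "Ys \<in> M" "0 < Ys" "\<forall>Y\<in>M. Ys \<le> Y"
    and A: "\<forall>Y\<in>M. (\<nexists>j::int. Y = 2 * real_of_int j + 1) \<longrightarrow> lam*Y \<in> M"
    and B: "\<forall>Y\<in>M. (\<nexists>j::int. Y = 2 * real_of_int j) \<longrightarrow> lam*(Y+1) \<in> M"
  shows False
proof -
  have "\<exists>k::int. Ys = 2 * real_of_int k + 1"
  proof (rule ccontr)
    assume "\<not> ?thesis"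
    then have "lam*Ys \<in> M" using A Ys by blast
    then have "Ys \<le> lam*Ys" using Ys by blast
    then show False using lam Ys by (smt (verit) mult_less_cancel_right2)
  qed
  then obtain k::int where k: "Ys = 2 * real_of_int k + 1" by blast
  have k0: "k \<ge> 0" using k Ys by linarith
  note desc = descent[OF lam k Ys(1) Ys(3) Ys(2) A]
  have D: "\<exists>i. lam^i*Q = Ys \<and> (\<forall>j\<le>i. lam^j*Q \<in> M)" if "Q \<in> M" "Q < Ys + 2" for Q
  proof -
    obtain n where "lam^n * Q < Ys" using exists_pow_lt lam Ys by blast
    then show ?thesis using desc[of n] that by blast
  qed
  have Bs: "lam * (Y + 1) \<in> M" if "Y \<in> M" "Ys < Y" "Y < Ys + 1" for Y
  proof -
    have "\<nexists>j::int. Y = 2 * real_of_int j"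
    proof
      assume "\<exists>j::int. Y = 2 * real_of_int j"
      then obtain j::int where "Y = 2 * real_of_int j" by blast
      then show False using that k no_int_between[of "2*k+1" "2*j"] by simp
    qed
    then show ?thesis using B that by blast
  qed
  have "\<nexists>j::int. Ys = 2 * real_of_int j"
  proof
    assume "\<exists>j::int. Ys = 2 * real_of_int j"
    then obtain j::int where "Ys = 2 * real_of_int j" by blast
    then have "real_of_int (2*j) = real_of_int (2*k+1)" using k by simp
    then have "2*j = 2*k+1" by (simp only: of_int_eq_iff)
    then show False by presburger
  qed
  then have Z: "lam*(Ys+1) \<in> M" using B Ys by blast
  have "lam*(Ys+1) < Ys + 2" using lam Ys by (smt (verit) mult_left_le_one_le)
  then obtain i where i: "lam^i*(lam*(Ys+1)) = Ys" "\<forall>j\<le>i. lam^j*(lam*(Ys+1)) \<in> M"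
    using D Z by blast
  have i0: "i \<noteq> 0"
  proof
    assume "i = 0"
    then have "lam = Ys/(Ys+1)" using i Ys by (simp add: field_simps)
    also have "\<dots> = (2 * real (nat k) + 1) / (2 * real (nat k) + 2)" using k k0
      by (simp add: add.commute)
    finally show False using excl by blast
  qed
  then obtain i' where ii': "i = Suc i'" using not0_implies_Suc by blast
  have Ys1: "0 < Ys + 1" using Ys by simp
  have powlt: "lam^(Suc m) * (Ys+1) < Ys + 1" for m
  proof -
    have "lam^(Suc m) < 1" using lam by (rule power_Suc_less_one)
    then show ?thesis using Ys1 by simp
  qed
  define a1v where "a1v = lam^i'*(lam*(Ys+1))"
  have a1: "a1v \<in> M" using i ii' unfolding a1v_def by simp
  have a1eq: "lam * a1v = Ys" using i ii' unfolding a1v_def by (simp add: mult.assoc)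
  have a1pos: "0 < a1v" unfolding a1v_def using lam Ys1 by simp
  have a1gt: "Ys < a1v"
  proof -
    have "lam*a1v < 1*a1v" using lam a1pos by (intro mult_strict_right_mono) auto
    then show ?thesis using a1eq by simp
  qed
  have a1lt: "a1v < Ys + 1"
  proof -
    have "a1v = lam^(Suc i') * (Ys+1)" unfolding a1v_def by (simp add: mult.assoc mult.commute mult.left_commute)
    then show ?thesis using powlt by simp
  qed
  have "lam*(a1v+1) \<in> M" using Bs a1 a1gt a1lt by blast
  moreover have e1: "lam*(a1v+1) = Ys + lam" using a1eq by (simp add: algebra_simps)
  ultimately have "Ys + lam \<in> M" by simp
  moreover have "Ys + lam < Ys + 2" using lam by simp
  ultimately obtain p where p: "lam^p*(Ys+lam) = Ys" using D by blast
  have p0: "p \<noteq> 0"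
  proof
    assume "p = 0" then show False using p lam by simp
  qed
  show False
  proof (cases i')
    case 0
    then have ii: "lam^2*(Ys+1) = Ys" using i ii' by (simp add: power2_eq_square mult.assoc)
    show False
    proof (cases "p = 1")
      case True
      then have "lam*(Ys+lam) = Ys" using p by simp
      then have e1: "lam*Ys + lam*lam = Ys" by (simp add: distrib_left)
      have e2: "lam*lam*Ys + lam*lam = Ys" using ii by (simp add: power2_eq_square distrib_left)
      have "lam*Ys = (lam*lam)*Ys" using e1 e2 by linarith
      then have "lam = lam*lam" using Ys by simp
      then show False using lam by simp
    next
      case False
      then have "p \<ge> 2" using p0 by simp
      then have "lam^p \<le> lam^2" using lam by (simp add: power_decreasing)
      then have "lam^p*(Ys+lam) \<le> lam^2*(Ys+lam)" using lam Ys by (simp add: mult_right_mono)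
      also have "\<dots> < lam^2*(Ys+1)" using lam by simp
      finally show False using ii p by simp
    qed
  next
    case (Suc i'')
    define a2 where "a2 = lam^i''*(lam*(Ys+1))"
    have a2M: "a2 \<in> M" using i ii' Suc unfolding a2_def by simp
    have a2eq: "lam * a2 = a1v" unfolding a2_def a1v_def using Suc by (simp add: mult.assoc)
    have a2pos: "0 < a2" unfolding a2_def using lam Ys1 by simp
    have a2gt: "Ys < a2"
    proof -
      have "lam*a2 < 1*a2" using lam a2pos by (intro mult_strict_right_mono) auto
      then show ?thesis using a2eq a1gt by simp
    qed
    have a2lt: "a2 < Ys + 1"
    proof -
      have "a2 = lam^(Suc i'') * (Ys+1)" unfolding a2_def by (simp add: mult.assoc mult.commute mult.left_commute)
      then show ?thesis using powlt by simp
    qed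
    have "lam*(a2+1) \<in> M" using Bs a2M a2gt a2lt by blast
    moreover have "lam*(a2+1) = a1v + lam" using a2eq by (simp add: algebra_simps)
    ultimately have "a1v + lam \<in> M" by simp
    moreover have "a1v + lam < Ys + 2" using a1lt lam by simp
    ultimately obtain q where q: "lam^q*(a1v+lam) = Ys" using D by blast
    have q0: "q \<noteq> 0"
    proof
      assume "q = 0" then show False using q a1gt lam by simp
    qed
    define r where "r = q - 1"
    have qr: "q = Suc r" using q0 r_def by simp
    have eqr: "lam^r*(Ys+lam^2) = Ys"
    proof -
      have "lam^q*(a1v+lam) = lam^r * (lam*a1v + lam^2)" using qr
        by (simp add: algebra_simps power2_eq_square)
      then show ?thesis using q a1eq by simp
    qed
    have lt2: "lam^2 < lam" using lam by (simp add: power2_eq_square)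
    show False
    proof (cases "r < p")
      case True
      obtain d where pd: "p = r + Suc d" using less_imp_Suc_add[OF True] by auto
      have "lam^p*(Ys+lam) = lam^r*(lam^(Suc d)*(Ys+lam))" using pd by (simp add: power_add mult.assoc)
      then have "lam^r*(Ys+lam^2) = lam^r*(lam^(Suc d)*(Ys+lam))" using p eqr by simp
      then have e: "Ys+lam^2 = lam^(Suc d)*(Ys+lam)" using lam by simp
      have "lam^d \<le> 1" using lam by (simp add: power_le_one)
      then have "lam^(Suc d) \<le> lam" using lam by (simp add: mult_left_le)
      then have "lam^(Suc d)*(Ys+lam) \<le> lam*(Ys+lam)" using lam Ys by (intro mult_right_mono) auto
      also have "\<dots> = lam*Ys + lam^2" by (simp add: algebra_simps power2_eq_square)
      also have "\<dots> < Ys + lam^2" using lam Ys by simp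
      finally show False using e by simp
    next
      case False
      then have "lam^r \<le> lam^p" using lam by (simp add: power_decreasing)
      then have "lam^r*(Ys+lam^2) \<le> lam^p*(Ys+lam^2)" using lam Ys by (simp add: mult_right_mono)
      also have "\<dots> < lam^p*(Ys+lam)" using lt2 lam by simp
      finally show False using eqr p by simp
    qed
  qed
qed



lemma cos_ne0:
  assumes "\<nexists>j::int. 4*y = 2 * real_of_int j + 1"
  shows "cos (2*pi*y) \<noteq> 0"
proof
  assume "cos (2*pi*y) = 0"
  then obtain i::int where i: "odd i" "2*pi*y = of_int i * (pi/2)" using cos_zero_iff_int by blast
  then have "4*y = of_int i" using pi_gt_zero by (simp add: field_simps)
  moreover obtain j where "i = 2*j+1" using i(1) by (rule oddE)
  ultimately have "4*y = 2 * real_of_int j + 1" by simp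
  then show False using assms by blast
qed

lemma sin_ne0:
  assumes "\<nexists>j::int. 4*y = 2 * real_of_int j"
  shows "sin (2*pi*y) \<noteq> 0"
proof
  assume "sin (2*pi*y) = 0"
  then obtain i::int where i: "even i" "2*pi*y = of_int i * (pi/2)" using sin_zero_iff_int by blast
  then have "4*y = of_int i" using pi_gt_zero by (simp add: field_simps)
  moreover obtain j where "i = 2*j" using i(1) by (rule evenE)
  ultimately have "4*y = 2 * real_of_int j" by simp
  then show False using assms by blast
qed


lemma ps_limit_eq:
  assumes l0: "lam \<noteq> 0"
    and L: "(\<lambda>n. partial_sum lam f n x) \<longlonglongrightarrow> 1"
    and L0: "(\<lambda>n. partial_sum lam f n (tauL lam 0 x)) \<longlonglongrightarrow> 1"
    and L1: "(\<lambda>n. partial_sum lam f n (tauL lam (1/4) x)) \<longlonglongrightarrow> 1"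
  shows "f x = (cos (2*pi*x))^2 * f (lam * x)"
proof -
  have "(\<lambda>n. partial_sum lam f (Suc n) x) \<longlonglongrightarrow> 1" using L by (rule LIMSEQ_Suc)
  moreover have "(\<lambda>n. partial_sum lam f (Suc n) x) \<longlonglongrightarrow> f x
     + Wf lam (tauL lam 0 x) * (1 - f (tauL lam 0 x))
     + Wf lam (tauL lam (1/4) x) * 1"
    unfolding partial_sum_Suc by (intro tendsto_intros L0 L1)
  ultimately have e: "1 = f x + Wf lam (tauL lam 0 x) * (1 - f (tauL lam 0 x))
     + Wf lam (tauL lam (1/4) x) * 1" by (rule LIMSEQ_unique)
  have s: "Wf lam (tauL lam 0 x) + Wf lam (tauL lam (1/4) x) = 1"
    using l0 by (simp add: Wf_tau0 Wf_tau1)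
  have "f x = Wf lam (tauL lam 0 x) * f (tauL lam 0 x)" using e s by (simp add: algebra_simps)
  moreover have "Wf lam (tauL lam 0 x) = (cos (2*pi*x))^2" by (rule Wf_tau0[OF l0])
  moreover have "tauL lam 0 x = lam * x" by (simp add: tauL_def)
  ultimately show ?thesis by simp
qed

theorem theorem4p10:
  fixes lam :: real
  assumes "0 < lam" "lam < 1"
    and "\<forall>n::nat. n \<ge> 1 \<longrightarrow> lam \<noteq> 1 - 1 / (2 * real n)"
  defines "g \<equiv> (\<lambda>x. (cmod (nu_hat lam x))^2)"
  shows "continuous_on (XL lam) g
    \<and> (\<forall>x\<in>XL lam. (\<lambda>n. partial_sum lam g n x) \<longlonglongrightarrow> 1)
    \<and> (\<forall>f :: real \<Rightarrow> real. continuous_on (XL lam) f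
          \<and> (\<forall>x\<in>XL lam. (\<lambda>n. partial_sum lam f n x) \<longlonglongrightarrow> 1)
          \<longrightarrow> (\<forall>x\<in>XL lam. f x = g x))"
proof -
  have lam: "0 < lam" "lam < 1" using assms by auto
  have l0: "lam \<noteq> 0" using lam by simp
  have Gp1: "continuous_on UNIV g" unfolding g_def by (rule G_props(1)[OF lam])
  have Gp2: "g 0 = 1" unfolding g_def using G_props(2)[OF lam] by simp
  have Gp3: "0 \<le> g x" for x unfolding g_def by simp
  have Gp4: "g x \<le> 1" for x unfolding g_def using G_props(4)[OF lam] by simp
  have Gp5: "g x = (cos (2 * pi * x))^2 * g (lam * x)" for x unfolding g_def by (rule G_props(5)[OF lam])
  note Gp = Gp1 Gp2 Gp3 Gp4 Gp5
  define c0 where "c0 x = (cos (2*pi*x))^2" for x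
  define s0 where "s0 x = (sin (2*pi*x))^2" for x
  have cs: "c0 x + s0 x = 1" for x unfolding c0_def s0_def by (simp add: add.commute)
  have c0nn: "0 \<le> c0 x" for x unfolding c0_def by simp
  have s0nn: "0 \<le> s0 x" for x unfolding s0_def by simp
  have grec: "g x = c0 x * g (lam * x)" for x unfolding c0_def by (rule Gp5)
  have XLt0: "lam * x \<in> XL lam" if "x \<in> XL lam" for x
    using XL_props(3)[OF lam that] by (simp add: tauL_def)
  have XLt1: "lam * (x + 1/4) \<in> XL lam" if "x \<in> XL lam" for x
    using XL_props(4)[OF lam that] by (simp add: tauL_def)
  have part1: "continuous_on (XL lam) g"
    by (rule continuous_on_subset[OF Gp(1)]) simp
  have part3: "\<forall>x\<in>XL lam. f x = g x"
    if fc: "continuous_on (XL lam) f" and fl: "\<forall>x\<in>XL lam. (\<lambda>n. partial_sum lam f n x) \<longlonglongrightarrow> 1" for f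
  proof -
    have frec: "f x = c0 x * f (lam * x)" if x: "x \<in> XL lam" for x
      unfolding c0_def
      by (rule ps_limit_eq[OF l0]) (use fl x XL_props(3,4)[OF lam x] in auto)
    have z: "0 \<in> XL lam" by (rule zero_in_XL[OF lam])
    have ps0: "partial_sum lam f n 0 = f 0" for n
    proof (induction n)
      case 0 then show ?case by (simp add: partial_sum_0)
    next
      case (Suc n) then show ?case
        by (simp add: partial_sum_Suc Wf_tau0[OF l0] Wf_tau1[OF l0]) (simp add: tauL_def)
    qed
    have "(\<lambda>n. partial_sum lam f n 0) \<longlonglongrightarrow> 1" using fl z by blast
    moreover have "(\<lambda>n. partial_sum lam f n 0) = (\<lambda>n. f 0)" using ps0 by (simp add: fun_eq_iff)
    ultimately have "(\<lambda>n. f 0) \<longlonglongrightarrow> 1" by simp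
    then have f0: "f 0 = 1" by (simp add: LIMSEQ_const_iff)
    define e where "e x = f x - g x" for x
    have erec: "e x = c0 x * e (lam * x)" if "x \<in> XL lam" for x
      unfolding e_def using frec[OF that] grec[of x] by (simp add: right_diff_distrib)
    have e0: "e 0 = 0" unfolding e_def using f0 Gp(2) by simp
    have ec: "continuous_on (XL lam) e" unfolding e_def using fc part1 by (intro continuous_intros)
    show ?thesis
    proof
      fix x assume x: "x \<in> XL lam"
      have inXL: "lam^n * x \<in> XL lam" for n
      proof (induction n)
        case 0 then show ?case using x by simp
      next
        case (Suc n) then show ?case using XLt0[OF Suc] by (simp add: mult.assoc)
      qed
      have bound: "\<bar>e x\<bar> \<le> \<bar>e (lam^n * x)\<bar>" for n
      proof (induction n)
        case 0 then show ?case by simp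
      next
        case (Suc n)
        have "\<bar>e (lam^n * x)\<bar> = c0 (lam^n * x) * \<bar>e (lam * (lam^n * x))\<bar>"
          using erec[OF inXL[of n]] c0nn by (simp add: abs_mult)
        also have "\<dots> \<le> \<bar>e (lam * (lam^n * x))\<bar>"
          using cs[of "lam^n * x"] s0nn[of "lam^n * x"] c0nn[of "lam^n * x"]
          by (intro mult_left_le_one_le) auto
        finally show ?case using Suc by (simp add: mult.assoc)
      qed
      have lz: "(\<lambda>n. lam^n * x) \<longlonglongrightarrow> 0"
        using LIMSEQ_power_zero[of lam] lam by (intro tendsto_mult_left_zero) auto
      have "(\<lambda>n. e (lam^n * x)) \<longlonglongrightarrow> e 0"
        by (rule continuous_on_tendsto_compose[OF ec lz z]) (simp add: inXL)
      then have "(\<lambda>n. \<bar>e (lam^n * x)\<bar>) \<longlonglongrightarrow> 0" using e0 tendsto_rabs by fastforce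
      then have "\<bar>e x\<bar> \<le> 0" using bound by (intro LIMSEQ_le_const) auto
      then show "f x = g x" unfolding e_def by simp
    qed
  qed
  define P where "P n x = partial_sum lam g n x" for n x
  have Prec: "P (Suc n) x = c0 x * P n (lam * x) + s0 x * P n (lam * (x + 1/4))" for n x
  proof -
    have "P (Suc n) x = g x + c0 x * (P n (lam * x) - g (lam * x)) + s0 x * P n (lam * (x + 1/4))"
      unfolding P_def partial_sum_Suc Wf_tau0[OF l0] Wf_tau1[OF l0] c0_def s0_def
      by (simp add: tauL_def)
    then show ?thesis using grec[of x] by (simp add: algebra_simps)
  qed
  have P0: "P 0 x = g x" for x unfolding P_def by (simp add: partial_sum_0)
  have Pb: "\<forall>x. 0 \<le> P n x \<and> P n x \<le> 1" for n
  proof (induction n)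
    case 0 then show ?case using Gp(3,4) by (simp add: P0)
  next
    case (Suc n)
    show ?case
    proof
      fix x
      have a: "0 \<le> c0 x * P n (lam * x)" "c0 x * P n (lam * x) \<le> c0 x"
        using Suc c0nn[of x] by (auto intro: mult_left_le_one_le mult_nonneg_nonneg simp: mult_left_le)
      have b: "0 \<le> s0 x * P n (lam * (x + 1/4))" "s0 x * P n (lam * (x + 1/4)) \<le> s0 x"
        using Suc s0nn[of x] by (auto intro: mult_nonneg_nonneg simp: mult_left_le)
      show "0 \<le> P (Suc n) x \<and> P (Suc n) x \<le> 1" unfolding Prec using a b cs[of x] by linarith
    qed
  qed
  have Pmono: "P n x \<le> P (Suc n) x" for n x
    unfolding P_def by (rule partial_sum_mono) (use Gp(3) in auto)
  have Pcont: "continuous_on UNIV (P n)" for n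
  proof (induction n)
    case 0 then show ?case using Gp(1) by (simp add: P0[abs_def])
  next
    case (Suc n)
    have eq: "P (Suc n) = (\<lambda>x. c0 x * P n (lam * x) + s0 x * P n (lam * (x + 1/4)))"
      using Prec by (simp add: fun_eq_iff)
    have c1: "continuous_on UNIV (\<lambda>x. P n (lam * x))"
      by (rule continuous_on_compose2[OF Suc]) (auto intro!: continuous_intros)
    have c2: "continuous_on UNIV (\<lambda>x. P n (lam * (x + 1/4)))"
      by (rule continuous_on_compose2[OF Suc]) (auto intro!: continuous_intros)
    show ?case unfolding eq c0_def s0_def using c1 c2 by (intro continuous_intros)
  qed
  define h where "h x = (SUP n. P n x)" for x
  have hlim: "(\<lambda>n. P n x) \<longlonglongrightarrow> h x" for x
    unfolding h_def
  proof (rule LIMSEQ_incseq_SUP)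
    show "bdd_above (range (\<lambda>n. P n x))" using Pb by (intro bdd_aboveI[of _ 1]) auto
    show "incseq (\<lambda>n. P n x)" using Pmono by (intro incseq_SucI) auto
  qed
  have Ple: "P n x \<le> h x" for n x
  proof -
    have "incseq (\<lambda>n. P n x)" using Pmono by (intro incseq_SucI) auto
    then show ?thesis using hlim incseq_le by blast
  qed
  have hle1: "h x \<le> 1" for x
    using hlim[of x] Pb by (intro LIMSEQ_le_const2) auto
  have hge: "g x \<le> h x" for x using Ple[of 0 x] by (simp add: P0)
  have hrec: "h x = c0 x * h (lam * x) + s0 x * h (lam * (x + 1/4))" for x
  proof -
    have "(\<lambda>n. P (Suc n) x) \<longlonglongrightarrow> h x" using hlim by (rule LIMSEQ_Suc)
    moreover have "(\<lambda>n. P (Suc n) x) \<longlonglongrightarrow> c0 x * h (lam * x) + s0 x * h (lam * (x + 1/4))"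
      unfolding Prec by (intro tendsto_intros hlim)
    ultimately show ?thesis by (rule LIMSEQ_unique)
  qed
  have hchar: "h x \<le> t \<longleftrightarrow> (\<forall>n. P n x \<le> t)" for x t
  proof
    assume "h x \<le> t" then show "\<forall>n. P n x \<le> t" using Ple order_trans by blast
  next
    assume a: "\<forall>n. P n x \<le> t"
    show "h x \<le> t" by (rule LIMSEQ_le_const2[OF hlim[of x]]) (use a in auto)
  qed
  have closedLe: "closed {x. \<forall>n. P n x \<le> t}" for t
  proof -
    have "{x. \<forall>n. P n x \<le> t} = (\<Inter>n. {x. P n x \<le> t})" by auto
    moreover have "closed {x. P n x \<le> t}" for n
      using Pcont[of n] by (intro closed_Collect_le) (auto intro: continuous_intros)
    ultimately show ?thesis by auto
  qed
  have setEq: "{x\<in>XL lam. h x \<le> t} = XL lam \<inter> {x. \<forall>n. P n x \<le> t}" for t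
    using hchar by auto
  have cptLe: "compact {x\<in>XL lam. h x \<le> t}" for t
    unfolding setEq by (rule compact_Int_closed[OF XL_props(1)[OF lam] closedLe])
  have part2: "\<forall>x\<in>XL lam. h x = 1"
  proof -
    define m where "m = Inf (h ` XL lam)"
    have XLne: "XL lam \<noteq> {}" by (rule XL_props(2)[OF lam])
    have bdd: "bdd_below (h ` XL lam)"
      using hge Gp(3) by (intro bdd_belowI[of _ 0]) (auto intro: order_trans)
    have hm: "m \<le> h x" if "x \<in> XL lam" for x
      unfolding m_def using bdd that by (auto intro: cInf_lower)
    define F where "F k = {x\<in>XL lam. h x \<le> m + 1 / (real k + 1)}" for k
    have "\<Inter>(range F) \<noteq> {}"
    proof (rule compact_nest)
      show "compact (F k)" for k unfolding F_def by (rule cptLe)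
      show "F k \<noteq> {}" for k
      proof -
        have "Inf (h ` XL lam) < m + 1 / (real k + 1)" unfolding m_def by simp
        then obtain y where "y \<in> h ` XL lam" "y < m + 1 / (real k + 1)"
          using cInf_lessD[of "h ` XL lam"] XLne by blast
        then show ?thesis unfolding F_def by force
      qed
      show "F n \<subseteq> F k" if "k \<le> n" for k n
      proof -
        have "1 / (real n + 1) \<le> 1 / (real k + 1)" using that by (simp add: frac_le)
        then show ?thesis unfolding F_def by auto
      qed
    qed
    then obtain x0 where x0: "\<And>k. x0 \<in> F k" by blast
    have x0XL: "x0 \<in> XL lam" using x0[of 0] unfolding F_def by simp
    have hx0: "h x0 \<le> m"
    proof (rule ccontr)
      assume "\<not> h x0 \<le> m"
      then obtain k where k: "inverse (real (Suc k)) < h x0 - m"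
        using reals_Archimedean[of "h x0 - m"] by auto
      have "h x0 \<le> m + 1 / (real k + 1)" using x0[of k] unfolding F_def by simp
      then show False using k by (simp add: inverse_eq_divide add.commute)
    qed
    define M where "M = {x\<in>XL lam. h x \<le> m}"
    have Mne: "M \<noteq> {}" using x0XL hx0 unfolding M_def by blast
    have Mc: "compact M" unfolding M_def by (rule cptLe)
    obtain ys where ys: "ys \<in> M" "\<forall>z\<in>M. ys \<le> z"
      using compact_attains_inf[OF Mc Mne] by blast
    have ysXL: "ys \<in> XL lam" using ys unfolding M_def by simp
    have ys0: "0 \<le> ys" using XL_props(5)[OF lam] ysXL by auto
    have inv0: "lam * x \<in> M" if "x \<in> M" "c0 x \<noteq> 0" for x
    proof -
      have xXL: "x \<in> XL lam" using that unfolding M_def by simp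
      have "h (lam * x) \<le> m"
      proof (rule ccontr)
        assume "\<not> h (lam * x) \<le> m"
        then have "c0 x * m < c0 x * h (lam * x)"
          using that(2) c0nn[of x] by (intro mult_strict_left_mono) auto
        moreover have "s0 x * m \<le> s0 x * h (lam * (x + 1/4))"
          using hm[OF XLt1[OF xXL]] s0nn[of x] by (intro mult_left_mono) auto
        moreover have "h x \<le> m" using that unfolding M_def by simp
        moreover have "c0 x * m + s0 x * m = m" using cs[of x] by (metis distrib_right mult_1)
        ultimately show False using hrec[of x] by linarith
      qed
      then show ?thesis using XLt0[OF xXL] unfolding M_def by simp
    qed
    have inv1: "lam * (x + 1/4) \<in> M" if "x \<in> M" "s0 x \<noteq> 0" for x
    proof -
      have xXL: "x \<in> XL lam" using that unfolding M_def by simp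
      have "h (lam * (x + 1/4)) \<le> m"
      proof (rule ccontr)
        assume "\<not> h (lam * (x + 1/4)) \<le> m"
        then have "s0 x * m < s0 x * h (lam * (x + 1/4))"
          using that(2) s0nn[of x] by (intro mult_strict_left_mono) auto
        moreover have "c0 x * m \<le> c0 x * h (lam * x)"
          using hm[OF XLt0[OF xXL]] c0nn[of x] by (intro mult_left_mono) auto
        moreover have "h x \<le> m" using that unfolding M_def by simp
        moreover have "c0 x * m + s0 x * m = m" using cs[of x] by (metis distrib_right mult_1)
        ultimately show False using hrec[of x] by linarith
      qed
      then show ?thesis using XLt1[OF xXL] unfolding M_def by simp
    qed
    show ?thesis
    proof (cases "ys = 0")
      case True
      have "1 \<le> h 0" using hge[of 0] Gp(2) by simp
      moreover have "h 0 \<le> m" using ys True unfolding M_def by simp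
      ultimately have "1 \<le> m" by simp
      then show ?thesis using hm hle1 by (meson antisym order_trans)
    next
      case False
      then have yspos: "0 < ys" using ys0 by simp
      define M' where "M' = (\<lambda>y. 4 * y) ` M"
      have excl: "\<forall>k::nat. lam \<noteq> (2 * real k + 1) / (2 * real k + 2)"
      proof
        fix k :: nat
        have "lam \<noteq> 1 - 1 / (2 * real (Suc k))" using assms(3) by auto
        moreover have "1 - 1 / (2 * real (Suc k)) = (2 * real k + 1) / (2 * real k + 2)" by (simp add: field_simps)
        ultimately show "lam \<noteq> (2 * real k + 1) / (2 * real k + 2)" by simp
      qed
      show ?thesis
      proof (rule FalseE, rule combo[OF lam excl, of "4 * ys" M'])
        show "4 * ys \<in> M'" unfolding M'_def using ys by blast
        show "0 < 4 * ys" using yspos by simp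
        show "\<forall>Y\<in>M'. 4 * ys \<le> Y" unfolding M'_def using ys by auto
        show "\<forall>Y\<in>M'. (\<nexists>j::int. Y = 2 * real_of_int j + 1) \<longrightarrow> lam * Y \<in> M'"
        proof (intro ballI impI)
          fix Y assume Y: "Y \<in> M'" "\<nexists>j::int. Y = 2 * real_of_int j + 1"
          then obtain y where y: "y \<in> M" "Y = 4 * y" unfolding M'_def by blast
          have "cos (2*pi*y) \<noteq> 0" using Y(2) y(2) by (intro cos_ne0) simp
          then have "c0 y \<noteq> 0" unfolding c0_def by simp
          then have "lam * y \<in> M" using inv0 y(1) by blast
          then show "lam * Y \<in> M'" unfolding M'_def y(2) by (force simp: mult_ac)
        qed
        show "\<forall>Y\<in>M'. (\<nexists>j::int. Y = 2 * real_of_int j) \<longrightarrow> lam * (Y + 1) \<in> M'"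
        proof (intro ballI impI)
          fix Y assume Y: "Y \<in> M'" "\<nexists>j::int. Y = 2 * real_of_int j"
          then obtain y where y: "y \<in> M" "Y = 4 * y" unfolding M'_def by blast
          have "sin (2*pi*y) \<noteq> 0" using Y(2) y(2) by (intro sin_ne0) simp
          then have "s0 y \<noteq> 0" unfolding s0_def by simp
          then have "lam * (y + 1/4) \<in> M" using inv1 y(1) by blast
          moreover have "lam * (Y + 1) = 4 * (lam * (y + 1/4))" using y(2) by (simp add: algebra_simps)
          ultimately show "lam * (Y + 1) \<in> M'" unfolding M'_def by blast
        qed
      qed
    qed
  qed
  have "\<forall>x\<in>XL lam. (\<lambda>n. partial_sum lam g n x) \<longlonglongrightarrow> 1"
  proof
    fix x assume "x \<in> XL lam"
    then have "h x = 1" using part2 by blast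
    then show "(\<lambda>n. partial_sum lam g n x) \<longlonglongrightarrow> 1" using hlim[of x] unfolding P_def by simp
  qed
  then show ?thesis using part1 part3 by blast
qed

end
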